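(* Consider a quadrotor with unknown mass $m>0$, and the position and attitude tracking errors $e_p(t)\in\mathbb{R}^3$, $e_q(t)\in\mathbb{R}^3$, with $\xi_p=[e_p^T\ \dot e_p^T]^T$, $\xi_q=[e_q^T\ \dot e_q^T]^T$ and sliding variables $$s_p=\dot e_p+\Phi_p e_p,\qquad s_q=\dot e_q+\Phi_q e_q,$$ where $\Phi_p,\Phi_q$ are positive definite gain matrices. Suppose the sliding variables obey $$m\dot s_p=\tau_p+\varphi_p-m g_p,\qquad J(t)\dot s_q=\tau_q-C_q(t)s_q+\varphi_q,$$ where $g_p=[0\ 0\ g]^T$ ($g>0$ the gravitational acceleration), $J(t)\in\mathbb{R}^{3\times 3}$ is a continuously differentiable symmetric matrix with $\underline{j}I\le J(t)\le \overline{j}I$ for some unknown $0<\underline j\le\overline j$, $C_q(t)\in\mathbb{R}^{3\times3}$ satisfies $r^T(\dot J-2C_q)r=0$ for all $r\in\mathbb{R}^3$, and the (unknown) lumped uncertainties satisfy, for all $t$, $$\|\varphi_p\|\le K_{p0}^*+K_{p1}^*\|\xi_p\|,\qquad \|\varphi_q\|\le K_{q0}^*+K_{q1}^*\|\xi_q\|+K_{q2}^*\|\xi_q\|^2$$ for unknown finite constants $K_{pi}^*,K_{qi}^*\ge 0$. Apply the control laws $$\tau_p=-\Lambda_p s_p-\rho_p\,\mathrm{sgn}(s_p)+\hat m\,g_p,\qquad \rho_p=\hat K_{p0}+\hat K_{p1}\|\xi_p\|,$$ $$\tau_q=-\Lambda_q s_q-\rho_q\,\mathrm{sgn}(s_q),\qquad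 \rho_q=\hat K_{q0}+\hat K_{q1}\|\xi_q\|+\hat K_{q2}\|\xi_q\|^2,$$ with positive definite $\Lambda_p,\Lambda_q$, $\mathrm{sgn}(x)=x/\|x\|$, and the adaptive laws $$\dot{\hat K}_{pi}=\|s_p\|\|\xi_p\|^i-\alpha_{pi}\hat K_{pi},\ \hat K_{pi}(0)>0\ (i=0,1),\qquad \dot{\hat m}=-s_p^Tg_p-\alpha_m\hat m,\ \hat m(0)>0,$$ $$\dot{\hat K}_{qi}=\|s_q\|\|\xi_q\|^i-\alpha_{qi}\hat K_{qi},\ \hat K_{qi}(0)>0\ (i=0,1,2),$$ with design scalars $\alpha_{pi},\alpha_m,\alpha_{qi}>0$. Then the closed-loop trajectories are uniformly ultimately bounded: defining $$V=\tfrac12 s_p^Tms_p+\tfrac12\sum_{i=0}^{1}(\hat K_{pi}-K_{pi}^* )^2+\tfrac12(\hat m-m)^2+\tfrac12 s_q^TJs_q+\tfrac12\sum_{i=0}^{2}(\hat K_{qi}-K_{qi}^* )^2,$$ there exists a constant $\bar{\mathcal B}\ge0$, depending only on $m,\overline j$, the constants $K_{pi}^*,K_{qi}^*$ and the design parameters $\Lambda_p,\Lambda_q,\alpha_{pi},\alpha_m,\alpha_{qi}$, such that $V(t)\le\max\{V(0),\bar{\mathcal B}\}$ for all $t\ge0$.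
   Context: This abstracts the outer (position) and inner (attitude) loops of a quadrotor controller: $p=[x\ y\ z]^T$ and $q=[\phi\ \theta\ \psi]^T$ are position and roll/pitch/yaw; $e_p=p-p_d$ for a bounded smooth desired trajectory $p_d$; $e_q$ is the attitude error (obtained from the vee map of $R_d^TR-R^TR_d$), $J$ the inertia matrix and $C_q$ the Coriolis matrix of the attitude dynamics, $\varphi_p,\varphi_q$ lump disturbances and unknown dynamics. $\lambda_{\min}(\cdot)$ denotes minimum eigenvalue. Uniformly ultimately bounded means: there exist $b>0$, $c>0$ such that for every $0<a<c$ there is $T>0$ with $\|x(t_0)\|\le a\Rightarrow\|x(t)\|\le b$ for all $t\ge t_0+T$. *)

theory Defs
  imports "HOL-Analysis.Analysis"
begin

definition posdef :: "real^3^3 \<Rightarrow> bool" where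
  "posdef A \<longleftrightarrow> transpose A = A \<and> (\<forall>x. x \<noteq> 0 \<longrightarrow> 0 < x \<bullet> (A *v x))"

definition gvec :: "real \<Rightarrow> real^3" where
  "gvec g = vector [0, 0, g]"

definition slide :: "real^3^3 \<Rightarrow> (real \<Rightarrow> real^3) \<Rightarrow> (real \<Rightarrow> real^3) \<Rightarrow> real \<Rightarrow> real^3" where
  "slide Phi e de t = de t + Phi *v e t"

text \<open>Norm of the stacked state xi = [e^T de^T]^T (product norm = Euclidean norm on R^6).\<close>
definition xinorm :: "(real \<Rightarrow> real^3) \<Rightarrow> (real \<Rightarrow> real^3) \<Rightarrow> real \<Rightarrow> real" where
  "xinorm e de t = norm (e t, de t)"

text \<open>Position control law; sgn x = x / norm x (library sgn on vectors).\<close>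
definition tau_p :: "real^3^3 \<Rightarrow> real^3^3 \<Rightarrow> real \<Rightarrow> (real \<Rightarrow> real^3) \<Rightarrow> (real \<Rightarrow> real^3)
    \<Rightarrow> (nat \<Rightarrow> real \<Rightarrow> real) \<Rightarrow> (real \<Rightarrow> real) \<Rightarrow> real \<Rightarrow> real^3" where
  "tau_p Lp Phip g ep dep Kp mh t =
     (let s = slide Phip ep dep t; x = xinorm ep dep t; rho = Kp 0 t + Kp 1 t * x
      in - (Lp *v s) - rho *\<^sub>R sgn s + mh t *\<^sub>R gvec g)"

definition tau_q :: "real^3^3 \<Rightarrow> real^3^3 \<Rightarrow> (real \<Rightarrow> real^3) \<Rightarrow> (real \<Rightarrow> real^3)
    \<Rightarrow> (nat \<Rightarrow> real \<Rightarrow> real) \<Rightarrow> real \<Rightarrow> real^3" where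
  "tau_q Lq Phiq eq deq Kq t =
     (let s = slide Phiq eq deq t; x = xinorm eq deq t;
          rho = Kq 0 t + Kq 1 t * x + Kq 2 t * x\<^sup>2
      in - (Lq *v s) - rho *\<^sub>R sgn s)"

definition closed_loop ::
  "real \<Rightarrow> real \<Rightarrow> (nat \<Rightarrow> real) \<Rightarrow> (nat \<Rightarrow> real) \<Rightarrow> real^3^3 \<Rightarrow> real^3^3
   \<Rightarrow> (nat \<Rightarrow> real) \<Rightarrow> real \<Rightarrow> (nat \<Rightarrow> real)
   \<Rightarrow> real \<Rightarrow> real \<Rightarrow> real^3^3 \<Rightarrow> real^3^3
   \<Rightarrow> (real \<Rightarrow> real^3^3) \<Rightarrow> (real \<Rightarrow> real^3^3) \<Rightarrow> (real \<Rightarrow> real^3^3)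
   \<Rightarrow> (real \<Rightarrow> real^3) \<Rightarrow> (real \<Rightarrow> real^3) \<Rightarrow> (real \<Rightarrow> real^3) \<Rightarrow> (real \<Rightarrow> real^3)
   \<Rightarrow> (real \<Rightarrow> real^3) \<Rightarrow> (real \<Rightarrow> real^3)
   \<Rightarrow> (real \<Rightarrow> real^3) \<Rightarrow> (real \<Rightarrow> real^3)
   \<Rightarrow> (real \<Rightarrow> real) \<Rightarrow> (nat \<Rightarrow> real \<Rightarrow> real) \<Rightarrow> (nat \<Rightarrow> real \<Rightarrow> real) \<Rightarrow> bool" where
  "closed_loop m ju Kps Kqs Lp Lq ap am aq g jl Phip Phiq J dJ Cq ep dep eq deq dsp dsq
      phip phiq mh Kp Kq \<longleftrightarrow>
    0 < g \<and> 0 < jl \<and> jl \<le> ju \<and> posdef Phip \<and> posdef Phiq \<and>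
    (\<forall>t\<ge>0. (ep has_vector_derivative dep t) (at t within {0..})) \<and>
    (\<forall>t\<ge>0. (eq has_vector_derivative deq t) (at t within {0..})) \<and>
    (\<forall>t\<ge>0. (J has_vector_derivative dJ t) (at t within {0..})) \<and>
    continuous_on {0..} dJ \<and>
    (\<forall>t\<ge>0. transpose (J t) = J t \<and>
       (\<forall>r. jl * (r \<bullet> r) \<le> r \<bullet> (J t *v r) \<and> r \<bullet> (J t *v r) \<le> ju * (r \<bullet> r))) \<and>
    (\<forall>t\<ge>0. \<forall>r. r \<bullet> ((dJ t - 2 *\<^sub>R Cq t) *v r) = 0) \<and>
    (\<forall>t\<ge>0. norm (phip t) \<le> Kps 0 + Kps 1 * xinorm ep dep t) \<and>
    (\<forall>t\<ge>0. norm (phiq t) \<le> Kqs 0 + Kqs 1 * xinorm eq deq t + Kqs 2 * (xinorm eq deq t)\<^sup>2) \<and>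
    (\<forall>t\<ge>0. (slide Phip ep dep has_vector_derivative dsp t) (at t within {0..}) \<and>
       m *\<^sub>R dsp t = tau_p Lp Phip g ep dep Kp mh t + phip t - m *\<^sub>R gvec g) \<and>
    (\<forall>t\<ge>0. (slide Phiq eq deq has_vector_derivative dsq t) (at t within {0..}) \<and>
       J t *v dsq t = tau_q Lq Phiq eq deq Kq t - Cq t *v slide Phiq eq deq t + phiq t) \<and>
    (\<forall>i<2. \<forall>t\<ge>0. (Kp i has_real_derivative
        (norm (slide Phip ep dep t) * xinorm ep dep t ^ i - ap i * Kp i t)) (at t within {0..})) \<and>
    (\<forall>i<2. 0 < Kp i 0) \<and>
    (\<forall>t\<ge>0. (mh has_real_derivative
        (- (slide Phip ep dep t \<bullet> gvec g) - am * mh t)) (at t within {0..})) \<and>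
    0 < mh 0 \<and>
    (\<forall>i<3. \<forall>t\<ge>0. (Kq i has_real_derivative
        (norm (slide Phiq eq deq t) * xinorm eq deq t ^ i - aq i * Kq i t)) (at t within {0..})) \<and>
    (\<forall>i<3. 0 < Kq i 0)"

definition Vfun ::
  "real \<Rightarrow> (nat \<Rightarrow> real) \<Rightarrow> (nat \<Rightarrow> real) \<Rightarrow> real^3^3 \<Rightarrow> real^3^3 \<Rightarrow> (real \<Rightarrow> real^3^3)
   \<Rightarrow> (real \<Rightarrow> real^3) \<Rightarrow> (real \<Rightarrow> real^3) \<Rightarrow> (real \<Rightarrow> real^3) \<Rightarrow> (real \<Rightarrow> real^3)
   \<Rightarrow> (real \<Rightarrow> real) \<Rightarrow> (nat \<Rightarrow> real \<Rightarrow> real) \<Rightarrow> (nat \<Rightarrow> real \<Rightarrow> real) \<Rightarrow> real \<Rightarrow> real" where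
  "Vfun m Kps Kqs Phip Phiq J ep dep eq deq mh Kp Kq t =
     (let sp = slide Phip ep dep t; sq = slide Phiq eq deq t in
       1/2 * (sp \<bullet> (m *\<^sub>R sp)) + 1/2 * (\<Sum>i<2. (Kp i t - Kps i)\<^sup>2) + 1/2 * (mh t - m)\<^sup>2
       + 1/2 * (sq \<bullet> (J t *v sq)) + 1/2 * (\<Sum>i<3. (Kq i t - Kqs i)\<^sup>2))"

end

theory Submission
  imports Defs
begin


lemma mv_component_bound:
  fixes A :: "real^3^3" and x :: "real^3"
  shows "\<bar>(A *v x) $ i\<bar> \<le> norm A * norm x"
proof -
  have "(A *v x) $ i = A $ i \<bullet> x"
    by (simp add: matrix_vector_mult_def inner_vec_def)
  also have "\<bar>\<dots>\<bar> \<le> norm (A $ i) * norm x" by (rule Cauchy_Schwarz_ineq2)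
  also have "\<dots> \<le> norm A * norm x"
    by (rule mult_right_mono[OF Finite_Cartesian_Product.norm_nth_le]) simp
  finally show ?thesis .
qed

lemma mv_norm_bound:
  fixes a :: "real^3^3" and b :: "real^3"
  shows "norm (a *v b) \<le> norm a * norm b * 3"
proof -
    have "norm (a *v b) \<le> (\<Sum>i\<in>UNIV. \<bar>(a *v b) $ i\<bar>)" by (rule norm_le_l1_cart)
    also have "\<dots> \<le> (\<Sum>i\<in>(UNIV::3 set). norm a * norm b)"
      by (rule sum_mono) (rule mv_component_bound)
    also have "\<dots> = norm a * norm b * 3" by simp
    finally show ?thesis .
qed

lemma bb_mv: "bounded_bilinear (\<lambda>(A::real^3^3) (x::real^3). A *v x)"
  apply (rule bounded_bilinear.intro)
  apply (simp_all add: matrix_vector_mult_add_rdistrib matrix_vector_right_distrib)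
    apply (simp add: vec_eq_iff matrix_vector_mult_def sum_distrib_left algebra_simps)
   apply (simp add: vec_eq_iff matrix_vector_mult_def sum_distrib_left algebra_simps)
  using mv_norm_bound by blast

lemma posdef_lb:
  assumes "posdef A"
  shows "\<exists>l>0. \<forall>x. l * (x \<bullet> x) \<le> x \<bullet> (A *v x)"
proof -
  let ?S = "sphere (0::real^3) 1"
  have cont: "continuous_on ?S (\<lambda>x. x \<bullet> (A *v x))"
    by (intro continuous_intros linear_continuous_on bounded_linear.linear) simp
  have ne: "?S \<noteq> {}" by (simp add: sphere_eq_empty)
  obtain u where u: "u \<in> ?S" "\<And>y. y \<in> ?S \<Longrightarrow> u \<bullet> (A *v u) \<le> y \<bullet> (A *v y)"
    using continuous_attains_inf[OF compact_sphere ne cont] by blast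
  have "u \<noteq> 0" using u(1) by auto
  hence lpos: "0 < u \<bullet> (A *v u)" using assms by (simp add: posdef_def)
  show ?thesis
  proof (intro exI conjI allI)
    show "0 < u \<bullet> (A *v u)" by fact
    fix x :: "real^3"
    show "u \<bullet> (A *v u) * (x \<bullet> x) \<le> x \<bullet> (A *v x)"
    proof (cases "x = 0")
      case True thus ?thesis by simp
    next
      case False
      let ?y = "(1 / norm x) *\<^sub>R x"
      have "?y \<in> ?S" using False by simp
      hence "u \<bullet> (A *v u) \<le> ?y \<bullet> (A *v ?y)" by (rule u(2))
      also have "?y \<bullet> (A *v ?y) = (x \<bullet> (A *v x)) / (x \<bullet> x)"
        using False by (simp add: matrix_vector_mult_scaleR power2_norm_eq_inner[symmetric] power2_eq_square)
      finally show ?thesis using False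
        by (simp add: pos_le_divide_eq)
    qed
  qed
qed



lemma comparison:
  fixes V Vd :: "real \<Rightarrow> real" and k C :: real
  assumes k: "0 < k"
    and der: "\<And>t. 0 \<le> t \<Longrightarrow> (V has_real_derivative Vd t) (at t within {0..})"
    and bnd: "\<And>t. 0 \<le> t \<Longrightarrow> Vd t \<le> - k * V t + C"
    and t1: "0 \<le> t1"
  shows "V t1 \<le> max (V 0) (C / k)"
proof (rule ccontr)
  define W where "W = max (V 0) (C / k)"
  assume "\<not> V t1 \<le> max (V 0) (C / k)"
  hence gt: "W < V t1" unfolding W_def by linarith
  have cont: "continuous_on {0..} V"
    unfolding continuous_on_eq_continuous_within using der DERIV_continuous by blast
  define S where "S = {0..t1} \<inter> V -` {..W}"
  have cS: "closed S" unfolding S_def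
    by (rule continuous_closed_preimage) (auto intro: continuous_on_subset[OF cont])
  have "0 \<in> S" using t1 by (simp add: S_def W_def)
  hence neS: "S \<noteq> {}" by auto
  have bS: "bdd_above S" unfolding S_def by (rule bdd_aboveI[of _ t1]) auto
  define s0 where "s0 = Sup S"
  have s0S: "s0 \<in> S" unfolding s0_def by (rule closed_contains_Sup[OF neS bS cS])
  hence s0: "0 \<le> s0" "s0 \<le> t1" "V s0 \<le> W" by (auto simp: S_def)
  have above: "W < V y" if "s0 < y" "y \<le> t1" for y
  proof (rule ccontr)
    assume "\<not> W < V y"
    hence "y \<in> S" using that s0 by (auto simp: S_def)
    hence "y \<le> s0" unfolding s0_def by (rule cSup_upper[OF _ bS])
    thus False using that by simp
  qed
  have "V t1 \<le> V s0"
  proof (rule DERIV_nonpos_imp_decreasing_open[of s0 t1 V])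
    show "s0 \<le> t1" by fact
    show "continuous_on {s0..t1} V" using s0 by (auto intro: continuous_on_subset[OF cont])
    fix x assume x: "s0 < x" "x < t1"
    have x0: "0 < x" using x s0 by linarith
    have "x \<in> interior {0::real..}" using x0 by simp
    hence "at x within {0..} = at x" by (rule at_within_interior)
    hence "(V has_real_derivative Vd x) (at x)"
      using der[of x] x0 by simp
    moreover have "Vd x \<le> 0"
    proof -
      have "W < V x" using above x by simp
      hence "C / k < V x" by (simp add: W_def)
      hence "C < k * V x" using k by (simp add: divide_less_eq mult.commute)
      thus ?thesis using bnd[of x] x0 by linarith
    qed
    ultimately show "\<exists>y. (V has_real_derivative y) (at x) \<and> y \<le> 0" by blast
  qed
  thus False using gt s0 by simp
qed



lemma quad_deriv:
  fixes s :: "real \<Rightarrow> real^3" and A :: "real \<Rightarrow> real^3^3"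
  assumes s: "(s has_vector_derivative s') (at t within T)"
    and A: "(A has_vector_derivative A') (at t within T)"
  shows "((\<lambda>t. s t \<bullet> (A t *v s t)) has_real_derivative
     (s t \<bullet> (A t *v s') + s t \<bullet> (A' *v s t) + s' \<bullet> (A t *v s t))) (at t within T)"
proof -
  have g: "((\<lambda>t. A t *v s t) has_vector_derivative (A t *v s' + A' *v s t)) (at t within T)"
    using bounded_bilinear.has_vector_derivative[OF bb_mv A s] by simp
  have "((\<lambda>t. s t \<bullet> (A t *v s t)) has_vector_derivative
     (s t \<bullet> (A t *v s' + A' *v s t) + s' \<bullet> (A t *v s t))) (at t within T)"
    using bounded_bilinear.has_vector_derivative[OF bounded_bilinear_inner s g] by simp
  thus ?thesis
    by (simp add: has_real_derivative_iff_has_vector_derivative inner_add_right)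
qed

lemma mv_scaleR_left: "((r::real) *\<^sub>R (A::real^3^3)) *v x = r *\<^sub>R (A *v x)"
  by (simp add: vec_eq_iff matrix_vector_mult_def sum_distrib_left algebra_simps)

lemma sqd:
  assumes "(f has_real_derivative f') (at t within T)"
  shows "((\<lambda>t. (f t - c)\<^sup>2) has_real_derivative (2 * (f t - c) * f')) (at t within T)"
  using assms by (auto intro!: derivative_eq_intros)

lemma term_bound:
  fixes a k K Ks :: real
  assumes "0 < k" "k \<le> a"
  shows "- a * (K - Ks) * K \<le> - k / 2 * (K - Ks)\<^sup>2 + a / 2 * Ks\<^sup>2"
proof -
  have e: "- a * (K - Ks) * K = - a / 2 * (K - Ks)\<^sup>2 - a/2 * K\<^sup>2 + a / 2 * Ks\<^sup>2"
    by (simp add: power2_eq_square algebra_simps)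
  have "0 \<le> (a - k) / 2 * (K - Ks)\<^sup>2" using assms by simp
  moreover have "0 \<le> a/2 * K\<^sup>2" using assms by simp
  ultimately show ?thesis unfolding e by (simp add: algebra_simps)
qed

lemma inner_sgn_self: "(x::real^3) \<bullet> sgn x = norm x"
  by (cases "x = 0") (simp_all add: sgn_div_norm power2_norm_eq_inner[symmetric] power2_eq_square)

lemma sym_swap:
  fixes A :: "real^3^3"
  assumes "transpose A = A"
  shows "y \<bullet> (A *v x) = x \<bullet> (A *v y)"
proof -
  have "y \<bullet> (A *v x) = (y v* A) \<bullet> x" by (simp add: dot_lmul_matrix)
  also have "y v* A = A *v y" using vector_transpose_matrix[of y A] assms by simp
  finally show ?thesis by (simp add: inner_commute)
qed



theorem mainTheorem1:
  fixes m ju :: real and Kps Kqs ap aq :: "nat \<Rightarrow> real" and am :: real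
    and Lp Lq :: "real^3^3"
  assumes "0 < m" and "0 < ju"
    and "\<forall>i<2. 0 \<le> Kps i" and "\<forall>i<3. 0 \<le> Kqs i"
    and "posdef Lp" and "posdef Lq"
    and "\<forall>i<2. 0 < ap i" and "0 < am" and "\<forall>i<3. 0 < aq i"
  shows "\<exists>B\<ge>0. \<forall>g jl Phip Phiq J dJ Cq ep dep eq deq dsp dsq phip phiq mh Kp Kq.
           closed_loop m ju Kps Kqs Lp Lq ap am aq g jl Phip Phiq J dJ Cq ep dep eq deq dsp dsq
             phip phiq mh Kp Kq \<longrightarrow>
           (\<forall>t\<ge>0. Vfun m Kps Kqs Phip Phiq J ep dep eq deq mh Kp Kq t
                   \<le> max (Vfun m Kps Kqs Phip Phiq J ep dep eq deq mh Kp Kq 0) B)"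
proof -
  note m = assms(1) and ju = assms(2)
  obtain lp where lp: "0 < lp" "\<And>x. lp * (x \<bullet> x) \<le> x \<bullet> (Lp *v x)"
    using posdef_lb[OF assms(5)] by blast
  obtain lq where lq: "0 < lq" "\<And>x. lq * (x \<bullet> x) \<le> x \<bullet> (Lq *v x)"
    using posdef_lb[OF assms(6)] by blast
  have ap0: "0 < ap 0" and ap1: "0 < ap 1" using assms(7) by auto
  have aq0: "0 < aq 0" and aq1: "0 < aq 1" and aq2: "0 < aq 2" using assms(9) by auto
  define k where "k = min (2*lp/m) (min (2*lq/ju) (min (ap 0) (min (ap 1) (min am
      (min (aq 0) (min (aq 1) (aq 2)))))))"
  define C where "C = ap 0/2 * (Kps 0)\<^sup>2 + ap 1/2 * (Kps 1)\<^sup>2 + am/2 * m\<^sup>2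
      + aq 0/2 * (Kqs 0)\<^sup>2 + aq 1/2 * (Kqs 1)\<^sup>2 + aq 2/2 * (Kqs 2)\<^sup>2"
  have kpos: "0 < k" unfolding k_def using lp lq m ju ap0 ap1 aq0 aq1 aq2 assms(8) by simp
  have k1: "k \<le> 2*lp/m" "k \<le> 2*lq/ju" "k \<le> ap 0" "k \<le> ap 1" "k \<le> am"
     "k \<le> aq 0" "k \<le> aq 1" "k \<le> aq 2" unfolding k_def by linarith+
  have Cnn: "0 \<le> C" unfolding C_def using ap0 ap1 aq0 aq1 aq2 assms(8) by simp
  show ?thesis
  proof (intro exI[of _ "C / k"] conjI allI impI)
    show "0 \<le> C / k" using Cnn kpos by simp
    fix g jl Phip Phiq J dJ Cq ep dep eq deq dsp dsq phip phiq mh Kp Kq and t :: real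
    assume CL: "closed_loop m ju Kps Kqs Lp Lq ap am aq g jl Phip Phiq J dJ Cq ep dep eq deq dsp dsq
             phip phiq mh Kp Kq"
    assume t0: "0 \<le> t"
    define sp where "sp = slide Phip ep dep"
    define sq where "sq = slide Phiq eq deq"
    define xp where "xp = xinorm ep dep"
    define xq where "xq = xinorm eq deq"
    define gv where "gv = gvec g"
    define Vx where "Vx = (\<lambda>t. 1/2 * (sp t \<bullet> (m *\<^sub>R sp t)) + 1/2 * ((Kp 0 t - Kps 0)\<^sup>2 + (Kp 1 t - Kps 1)\<^sup>2)
       + 1/2 * (mh t - m)\<^sup>2 + 1/2 * (sq t \<bullet> (J t *v sq t))
       + 1/2 * ((Kq 0 t - Kqs 0)\<^sup>2 + (Kq 1 t - Kqs 1)\<^sup>2 + (Kq 2 t - Kqs 2)\<^sup>2))"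
    have VV: "Vfun m Kps Kqs Phip Phiq J ep dep eq deq mh Kp Kq = Vx"
      by (rule ext) (simp add: Vfun_def Vx_def sp_def sq_def Let_def numeral_2_eq_2 numeral_3_eq_3)
    define Vd where "Vd = (\<lambda>t. 1/2 * (sp t \<bullet> (m *\<^sub>R dsp t) + dsp t \<bullet> (m *\<^sub>R sp t))
       + 1/2 * (2 * (Kp 0 t - Kps 0) * (norm (sp t) - ap 0 * Kp 0 t)
              + 2 * (Kp 1 t - Kps 1) * (norm (sp t) * xp t - ap 1 * Kp 1 t))
       + 1/2 * (2 * (mh t - m) * (- (sp t \<bullet> gv) - am * mh t))
       + 1/2 * (sq t \<bullet> (J t *v dsq t) + sq t \<bullet> (dJ t *v sq t) + dsq t \<bullet> (J t *v sq t))
       + 1/2 * (2 * (Kq 0 t - Kqs 0) * (norm (sq t) - aq 0 * Kq 0 t)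
              + 2 * (Kq 1 t - Kqs 1) * (norm (sq t) * xq t - aq 1 * Kq 1 t)
              + 2 * (Kq 2 t - Kqs 2) * (norm (sq t) * (xq t)\<^sup>2 - aq 2 * Kq 2 t)))"
    note CLu = CL[unfolded closed_loop_def]
    have H14: "\<forall>t\<ge>0. (slide Phip ep dep has_vector_derivative dsp t) (at t within {0..}) \<and>
       m *\<^sub>R dsp t = tau_p Lp Phip g ep dep Kp mh t + phip t - m *\<^sub>R gvec g"
      using CLu by (elim conjE) assumption
    have H15: "\<forall>t\<ge>0. (slide Phiq eq deq has_vector_derivative dsq t) (at t within {0..}) \<and>
       J t *v dsq t = tau_q Lq Phiq eq deq Kq t - Cq t *v slide Phiq eq deq t + phiq t"
      using CLu by (elim conjE) assumption
    have H8: "\<forall>t\<ge>0. (J has_vector_derivative dJ t) (at t within {0..})"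
      using CLu by (elim conjE) assumption
    have H16: "\<forall>i<2. \<forall>t\<ge>0. (Kp i has_real_derivative
        (norm (slide Phip ep dep t) * xinorm ep dep t ^ i - ap i * Kp i t)) (at t within {0..})"
      using CLu by (elim conjE) assumption
    have H18: "\<forall>t\<ge>0. (mh has_real_derivative
        (- (slide Phip ep dep t \<bullet> gvec g) - am * mh t)) (at t within {0..})"
      using CLu by (elim conjE) assumption
    have H20: "\<forall>i<3. \<forall>t\<ge>0. (Kq i has_real_derivative
        (norm (slide Phiq eq deq t) * xinorm eq deq t ^ i - aq i * Kq i t)) (at t within {0..})"
      using CLu by (elim conjE) assumption
    have der: "(Vx has_real_derivative Vd s) (at s within {0..})" if s: "0 \<le> s" for s
    proof -
      have dsp: "(sp has_vector_derivative dsp s) (at s within {0..})"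
        using H14 s by (simp add: sp_def)
      have dsq: "(sq has_vector_derivative dsq s) (at s within {0..})"
        using H15 s by (simp add: sq_def)
      have dJ: "(J has_vector_derivative dJ s) (at s within {0..})"
        using H8 s by simp
      have Kp0: "(Kp 0 has_real_derivative (norm (sp s) - ap 0 * Kp 0 s)) (at s within {0..})"
        using H16[rule_format, of 0 s] s by (simp add: sp_def)
      have Kp1: "(Kp 1 has_real_derivative (norm (sp s) * xp s - ap 1 * Kp 1 s)) (at s within {0..})"
        using H16[rule_format, of 1 s] s by (simp add: sp_def xp_def)
      have Kq0: "(Kq 0 has_real_derivative (norm (sq s) - aq 0 * Kq 0 s)) (at s within {0..})"
        using H20[rule_format, of 0 s] s by (simp add: sq_def)
      have Kq1: "(Kq 1 has_real_derivative (norm (sq s) * xq s - aq 1 * Kq 1 s)) (at s within {0..})"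
        using H20[rule_format, of 1 s] s by (simp add: sq_def xq_def)
      have Kq2: "(Kq 2 has_real_derivative (norm (sq s) * (xq s)\<^sup>2 - aq 2 * Kq 2 s)) (at s within {0..})"
        using H20[rule_format, of 2 s] s by (simp add: sq_def xq_def)
      have mhd: "(mh has_real_derivative (- (sp s \<bullet> gv) - am * mh s)) (at s within {0..})"
        using H18 s by (simp add: sp_def gv_def)
      have P1: "((\<lambda>t. sp t \<bullet> (m *\<^sub>R sp t)) has_real_derivative
          (sp s \<bullet> (m *\<^sub>R dsp s) + dsp s \<bullet> (m *\<^sub>R sp s))) (at s within {0..})"
      proof -
        have "((\<lambda>t. m *\<^sub>R sp t) has_vector_derivative m *\<^sub>R dsp s) (at s within {0..})"
          by (rule bounded_linear.has_vector_derivative[OF bounded_linear_scaleR_right dsp])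
        from bounded_bilinear.has_vector_derivative[OF bounded_bilinear_inner dsp this]
        show ?thesis by (simp add: has_real_derivative_iff_has_vector_derivative)
      qed
      have P2: "((\<lambda>t. sq t \<bullet> (J t *v sq t)) has_real_derivative
          (sq s \<bullet> (J s *v dsq s) + sq s \<bullet> (dJ s *v sq s) + dsq s \<bullet> (J s *v sq s))) (at s within {0..})"
        by (rule quad_deriv[OF dsq dJ])
      show ?thesis unfolding Vx_def Vd_def
        by (intro DERIV_add DERIV_cmult P1 P2 sqd Kp0 Kp1 Kq0 Kq1 Kq2 mhd)
    qed
    have H10: "\<forall>t\<ge>0. transpose (J t) = J t \<and>
       (\<forall>r. jl * (r \<bullet> r) \<le> r \<bullet> (J t *v r) \<and> r \<bullet> (J t *v r) \<le> ju * (r \<bullet> r))"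
      using CLu by (elim conjE) assumption
    have H11: "\<forall>t\<ge>0. \<forall>r. r \<bullet> ((dJ t - 2 *\<^sub>R Cq t) *v r) = 0"
      using CLu by (elim conjE) assumption
    have H12: "\<forall>t\<ge>0. norm (phip t) \<le> Kps 0 + Kps 1 * xinorm ep dep t"
      using CLu by (elim conjE) assumption
    have H13: "\<forall>t\<ge>0. norm (phiq t) \<le> Kqs 0 + Kqs 1 * xinorm eq deq t + Kqs 2 * (xinorm eq deq t)\<^sup>2"
      using CLu by (elim conjE) assumption
    have bnd: "Vd s \<le> - k * Vx s + C" if s: "0 \<le> s" for s
    proof -
      define np where "np = norm (sp s)"
      define nq where "nq = norm (sq s)"
      define ss where "ss = sp s \<bullet> sp s"
      define qq where "qq = sq s \<bullet> sq s"
      define P where "P = sp s \<bullet> (Lp *v sp s)"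
      define Q where "Q = sq s \<bullet> (Lq *v sq s)"
      define Jq where "Jq = sq s \<bullet> (J s *v sq s)"
      define CC where "CC = sq s \<bullet> (Cq s *v sq s)"
      define D1 where "D1 = sp s \<bullet> phip s - np * (Kps 0 + Kps 1 * xp s)"
      define D2 where "D2 = sq s \<bullet> phiq s - nq * (Kqs 0 + Kqs 1 * xq s + Kqs 2 * (xq s)\<^sup>2)"
      have dynp: "m *\<^sub>R dsp s = tau_p Lp Phip g ep dep Kp mh s + phip s - m *\<^sub>R gv"
        using H14 s by (simp add: gv_def)
      have tp: "tau_p Lp Phip g ep dep Kp mh s = - (Lp *v sp s) - (Kp 0 s + Kp 1 s * xp s) *\<^sub>R sgn (sp s) + mh s *\<^sub>R gv"
        by (simp add: tau_p_def Let_def sp_def xp_def gv_def)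
      have E1: "sp s \<bullet> (m *\<^sub>R dsp s) = - P - (Kp 0 s + Kp 1 s * xp s) * np + mh s * (sp s \<bullet> gv)
           + sp s \<bullet> phip s - m * (sp s \<bullet> gv)"
        unfolding dynp tp P_def np_def by (simp add: inner_diff_right inner_add_right inner_sgn_self)
      have E1b: "dsp s \<bullet> (m *\<^sub>R sp s) = sp s \<bullet> (m *\<^sub>R dsp s)" by (simp add: inner_commute)
      have dynq: "J s *v dsq s = tau_q Lq Phiq eq deq Kq s - Cq s *v sq s + phiq s"
        using H15 s by (simp add: sq_def)
      have tq: "tau_q Lq Phiq eq deq Kq s = - (Lq *v sq s) - (Kq 0 s + Kq 1 s * xq s + Kq 2 s * (xq s)\<^sup>2) *\<^sub>R sgn (sq s)"
        by (simp add: tau_q_def Let_def sq_def xq_def)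
      have E2: "sq s \<bullet> (J s *v dsq s) = - Q - (Kq 0 s + Kq 1 s * xq s + Kq 2 s * (xq s)\<^sup>2) * nq - CC + sq s \<bullet> phiq s"
        unfolding dynq tq Q_def nq_def CC_def by (simp add: inner_diff_right inner_add_right inner_sgn_self)
      have Jsym: "transpose (J s) = J s" using H10 s by simp
      have E2b: "dsq s \<bullet> (J s *v sq s) = sq s \<bullet> (J s *v dsq s)" by (rule sym_swap[OF Jsym])
      have "sq s \<bullet> ((dJ s - 2 *\<^sub>R Cq s) *v sq s) = 0" using H11 s by simp
      hence E3: "sq s \<bullet> (dJ s *v sq s) = 2 * CC"
        unfolding CC_def by (simp add: matrix_vector_mult_diff_rdistrib mv_scaleR_left inner_diff_right)
      have VdE: "Vd s = - P - Q + D1 + D2 - ap 0 * (Kp 0 s - Kps 0) * Kp 0 s - ap 1 * (Kp 1 s - Kps 1) * Kp 1 s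
         - am * (mh s - m) * mh s - aq 0 * (Kq 0 s - Kqs 0) * Kq 0 s - aq 1 * (Kq 1 s - Kqs 1) * Kq 1 s
         - aq 2 * (Kq 2 s - Kqs 2) * Kq 2 s"
        unfolding Vd_def E1b E2b E1 E2 E3 D1_def D2_def np_def[symmetric] nq_def[symmetric]
        by (simp add: algebra_simps power2_eq_square)
      have VxE: "- k * Vx s + C = - (k/2) * (m * ss) - (k/2) * Jq
         + (- k/2 * (Kp 0 s - Kps 0)\<^sup>2 + ap 0/2 * (Kps 0)\<^sup>2) + (- k/2 * (Kp 1 s - Kps 1)\<^sup>2 + ap 1/2 * (Kps 1)\<^sup>2)
         + (- k/2 * (mh s - m)\<^sup>2 + am/2 * m\<^sup>2)
         + (- k/2 * (Kq 0 s - Kqs 0)\<^sup>2 + aq 0/2 * (Kqs 0)\<^sup>2) + (- k/2 * (Kq 1 s - Kqs 1)\<^sup>2 + aq 1/2 * (Kqs 1)\<^sup>2)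
         + (- k/2 * (Kq 2 s - Kqs 2)\<^sup>2 + aq 2/2 * (Kqs 2)\<^sup>2)"
        unfolding Vx_def C_def ss_def Jq_def by (simp add: algebra_simps)
      have b1: "- P \<le> - (k/2) * (m * ss)"
      proof -
        have "k * m \<le> 2 * lp" using k1(1) m by (simp add: le_divide_eq)
        moreover have "0 \<le> ss" unfolding ss_def by simp
        ultimately have "(k/2) * (m * ss) \<le> lp * ss" using mult_right_mono[of "k*m" "2*lp" ss] by (simp add: algebra_simps)
        moreover have "lp * ss \<le> P" unfolding ss_def P_def by (rule lp(2))
        ultimately show ?thesis by linarith
      qed
      have b2: "- Q \<le> - (k/2) * Jq"
      proof -
        have "k * ju \<le> 2 * lq" using k1(2) ju by (simp add: le_divide_eq)
        moreover have "0 \<le> qq" unfolding qq_def by simp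
        ultimately have "(k/2) * (ju * qq) \<le> lq * qq" using mult_right_mono[of "k*ju" "2*lq" qq] by (simp add: algebra_simps)
        moreover have "Jq \<le> ju * qq" using H10 s unfolding Jq_def qq_def by simp
        hence "(k/2) * Jq \<le> (k/2) * (ju * qq)" using kpos by simp
        moreover have "lq * qq \<le> Q" unfolding qq_def Q_def by (rule lq(2))
        ultimately show ?thesis by linarith
      qed
      have b3: "D1 \<le> 0"
      proof -
        have "sp s \<bullet> phip s \<le> np * norm (phip s)" unfolding np_def by (rule norm_cauchy_schwarz)
        also have "\<dots> \<le> np * (Kps 0 + Kps 1 * xp s)"
          using H12 s unfolding np_def xp_def by (simp add: mult_left_mono)
        finally show ?thesis unfolding D1_def by simp
      qed
      have b4: "D2 \<le> 0"
      proof -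
        have "sq s \<bullet> phiq s \<le> nq * norm (phiq s)" unfolding nq_def by (rule norm_cauchy_schwarz)
        also have "\<dots> \<le> nq * (Kqs 0 + Kqs 1 * xq s + Kqs 2 * (xq s)\<^sup>2)"
          using H13 s unfolding nq_def xq_def by (simp add: mult_left_mono)
        finally show ?thesis unfolding D2_def by simp
      qed
      note t0 = term_bound[OF kpos k1(3), of "Kp 0 s" "Kps 0"]
      note t1 = term_bound[OF kpos k1(4), of "Kp 1 s" "Kps 1"]
      note t2 = term_bound[OF kpos k1(5), of "mh s" m]
      note t3 = term_bound[OF kpos k1(6), of "Kq 0 s" "Kqs 0"]
      note t4 = term_bound[OF kpos k1(7), of "Kq 1 s" "Kqs 1"]
      note t5 = term_bound[OF kpos k1(8), of "Kq 2 s" "Kqs 2"]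
      show ?thesis unfolding VdE VxE using b1 b2 b3 b4 t0 t1 t2 t3 t4 t5 by linarith
    qed
    have "Vx t \<le> max (Vx 0) (C / k)"
      by (rule comparison[OF kpos der bnd t0])
    thus "Vfun m Kps Kqs Phip Phiq J ep dep eq deq mh Kp Kq t
                   \<le> max (Vfun m Kps Kqs Phip Phiq J ep dep eq deq mh Kp Kq 0) (C / k)"
      unfolding VV .
  qed
qed


end
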